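(* Let $$f(t)=\frac{2431}{80}t^9-\frac{1287}{20}t^7+\frac{18333}{400}t^5+\frac{343}{40}t^4-\frac{83}{10}t^3-\frac{213}{100}t^2+\frac{t}{10}-\frac{1}{200}.$$ For any finite set $X=\{x_1,\dots,x_n\}\subset\mathbf{S}^2$, with $\phi_{i,j}$ the angular distance between $x_i$ and $x_j$, $$S(X):=\sum_{i=1}^n\sum_{j=1}^n f(\cos\phi_{i,j})\ \ge\ n^2.$$
   Context: $\mathbf{S}^2$ is the unit sphere in $\mathbb{R}^3$; the angular (spherical) distance between unit vectors $x,y$ is $\arccos\langle x,y\rangle$. *)

theory Defs
  imports "HOL-Analysis.Analysis"
begin

definition f_poly :: "real \<Rightarrow> real" where
  "f_poly t = 2431/80 * t^9 - 1287/20 * t^7 + 18333/400 * t^5 + 343/40 * t^4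
     - 83/10 * t^3 - 213/100 * t^2 + t/10 - 1/200"

definition ang_dist :: "real^3 \<Rightarrow> real^3 \<Rightarrow> real" where
  "ang_dist x y = arccos (inner x y)"

end

theory Submission
  imports Defs
begin

fun RR :: "nat \<Rightarrow> real \<Rightarrow> real \<Rightarrow> real" where
  "RR 0 u v = 1"
| "RR (Suc 0) u v = u"
| "RR (Suc (Suc m)) u v = 2 * u * RR (Suc m) u v - v * RR m u v"

definition peval :: "int list \<Rightarrow> real \<Rightarrow> real" where
  "peval cs x = (\<Sum>i<length cs. of_int (cs!i) * x^i)"

definition TT :: "nat \<Rightarrow> int list \<Rightarrow> real \<Rightarrow> real \<Rightarrow> real \<Rightarrow> real" where
  "TT m cs s c g = RR m s ((1-c^2)*(1-g^2)) * peval cs c * peval cs g"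

definition LL :: "(real \<times> nat \<times> int list) list" where
  "LL = [((8/5), 0, [0, 1]), ((8/5), 1, [1]), ((87/100), 0, [-1, 0, 3]), ((29/25), 1, [0, 3]), ((29/100), 2, [3]), ((33/80), 0, [0, -3, 0, 5]), ((11/160), 1, [-3, 0, 15]), ((11/400), 2, [0, 15]), ((11/2400), 3, [15]), ((49/1600), 0, [3, 0, -30, 0, 35]), ((49/1000), 1, [0, -15, 0, 35]), ((49/18000), 2, [-15, 0, 105]), ((7/9000), 3, [0, 105]), ((7/72000), 4, [105]), ((1/640), 0, [0, 15, 0, -70, 0, 63]), ((1/9600), 1, [15, 0, -210, 0, 315]), ((1/16800), 2, [0, -105, 0, 315]), ((1/403200), 3, [-105, 0, 945]), ((1/1814400), 4, [0, 945]), ((1/18144000), 5, [945]), ((1/51200), 0, [0, 315, 0, -4620, 0, 18018, 0, -25740, 0, 12155]), ((1/2304000), 1, [315, 0, -13860, 0, 90090, 0, -180180, 0, 109395]), ((1/3168000), 2, [0, -3465, 0, 45045, 0, -135135, 0, 109395]), ((1/266112000), 3, [-3465, 0, 135135, 0, -675675, 0, 765765]), ((1/5189184000), 4, [0, 135135, 0, -1351350, 0, 2297295]), ((1/363242880000), 5, [135135, 0, -4054050, 0, 11486475]), ((1/1362160800000), 6, [0, -2027025, 0, 11486475]), ((1/65383718400000), 7, [-2027025, 0, 34459425]), ((1/555761606400000), 8, [0, 34459425]), ((1/10003708915200000), 9, [34459425])]"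

lemma LL_nonneg: "\<forall>t\<in>set LL. fst t \<ge> 0"
  unfolding LL_def by simp

lemma L1: "(1::real) * ((1)*(s+c*g)^1) = (1) * TT 0 [0, 1] s c g + (1) * TT 1 [1] s c g"
  unfolding TT_def peval_def by (simp add: eval_nat_numeral; algebra?)

lemma L2: "(6::real) * ((-1)*(s+c*g)^0 + (3)*(s+c*g)^2) = (3) * TT 0 [-1, 0, 3] s c g + (4) * TT 1 [0, 3] s c g + (1) * TT 2 [3] s c g"
  unfolding TT_def peval_def by (simp add: eval_nat_numeral; algebra?)

lemma L3: "(180::real) * ((-3)*(s+c*g)^1 + (5)*(s+c*g)^3) = (90) * TT 0 [0, -3, 0, 5] s c g + (15) * TT 1 [-3, 0, 15] s c g + (6) * TT 2 [0, 15] s c g + (1) * TT 3 [15] s c g"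
  unfolding TT_def peval_def by (simp add: eval_nat_numeral; algebra?)

lemma L4: "(2520::real) * ((3)*(s+c*g)^0 + (-30)*(s+c*g)^2 + (35)*(s+c*g)^4) = (315) * TT 0 [3, 0, -30, 0, 35] s c g + (504) * TT 1 [0, -15, 0, 35] s c g + (28) * TT 2 [-15, 0, 105] s c g + (8) * TT 3 [0, 105] s c g + (1) * TT 4 [105] s c g"
  unfolding TT_def peval_def by (simp add: eval_nat_numeral; algebra?)

lemma L5: "(226800::real) * ((15)*(s+c*g)^1 + (-70)*(s+c*g)^3 + (63)*(s+c*g)^5) = (28350) * TT 0 [0, 15, 0, -70, 0, 63] s c g + (1890) * TT 1 [15, 0, -210, 0, 315] s c g + (1080) * TT 2 [0, -105, 0, 315] s c g + (45) * TT 3 [-105, 0, 945] s c g + (10) * TT 4 [0, 945] s c g + (1) * TT 5 [945] s c g"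
  unfolding TT_def peval_def by (simp add: eval_nat_numeral; algebra?)

lemma L9: "(25009272288000::real) * ((315)*(s+c*g)^1 + (-4620)*(s+c*g)^3 + (18018)*(s+c*g)^5 + (-25740)*(s+c*g)^7 + (12155)*(s+c*g)^9) = (195384939750) * TT 0 [0, 315, 0, -4620, 0, 18018, 0, -25740, 0, 12155] s c g + (4341887550) * TT 1 [315, 0, -13860, 0, 90090, 0, -180180, 0, 109395] s c g + (3157736400) * TT 2 [0, -3465, 0, 45045, 0, -135135, 0, 109395] s c g + (37592100) * TT 3 [-3465, 0, 135135, 0, -675675, 0, 765765] s c g + (1927800) * TT 4 [0, 135135, 0, -1351350, 0, 2297295] s c g + (27540) * TT 5 [135135, 0, -4054050, 0, 11486475] s c g + (7344) * TT 6 [0, -2027025, 0, 11486475] s c g + (153) * TT 7 [-2027025, 0, 34459425] s c g + (18) * TT 8 [0, 34459425] s c g + (1) * TT 9 [34459425] s c g"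
  unfolding TT_def peval_def by (simp add: eval_nat_numeral; algebra?)


lemma comb: "f_poly t = 1 + ((8/5)*((1)*t^1) + (87/50)*((-1)*t^0 + (3)*t^2) + (33/40)*((-3)*t^1 + (5)*t^3) + (49/200)*((3)*t^0 + (-30)*t^2 + (35)*t^4) + (1/80)*((15)*t^1 + (-70)*t^3 + (63)*t^5) + (1/400)*((315)*t^1 + (-4620)*t^3 + (18018)*t^5 + (-25740)*t^7 + (12155)*t^9))"
  unfolding f_poly_def by (simp add: field_simps; algebra?)

lemma key:
  fixes s c g :: real
  shows "f_poly (s + c*g) = 1 + (\<Sum>(a,m,cs)\<leftarrow>LL. a * TT m cs s c g)"
proof -
  note C = comb[of "s+c*g"]
  note LS = L1[of s c g] L2[of s c g] L3[of s c g] L4[of s c g] L5[of s c g] L9[of s c g]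
  show ?thesis unfolding LL_def
    apply (simp only: list.map sum_list_simps prod.case)
    using C LS by linarith
qed


lemma sq_id: "z^2 = 2 * complex_of_real (Re z) * z - complex_of_real ((cmod z)^2)"
  using cmod_power2[of z] by (simp add: complex_eq_iff power2_eq_square)

lemma RR_Re_aux: "Re (z^m) = RR m (Re z) ((cmod z)^2) \<and> Re (z^(Suc m)) = RR (Suc m) (Re z) ((cmod z)^2)"
proof (induction m)
  case 0
  then show ?case by simp
next
  case (Suc m)
  have "z^(Suc (Suc m)) = z^2 * z^m" by (simp add: power2_eq_square algebra_simps)
  also have "\<dots> = 2 * complex_of_real (Re z) * z^(Suc m) - complex_of_real ((cmod z)^2) * z^m"
    by (subst sq_id) (simp add: algebra_simps)
  finally have "Re (z^(Suc (Suc m))) = 2 * Re z * Re (z^(Suc m)) - (cmod z)^2 * Re (z^m)"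
    by simp
  with Suc.IH show ?case by (metis RR.simps(3))
qed

lemma RR_Re: "Re (z^m) = RR m (Re z) ((cmod z)^2)"
  using RR_Re_aux by blast

lemma psd:
  fixes zf :: "'a \<Rightarrow> complex" and h :: "'a \<Rightarrow> real"
  assumes "finite X"
  shows "0 \<le> (\<Sum>x\<in>X. \<Sum>y\<in>X. Re ((zf x * cnj (zf y))^m) * h x * h y)"
proof -
  define S where "S = (\<Sum>x\<in>X. complex_of_real (h x) * zf x ^ m)"
  have "S * cnj S = (\<Sum>x\<in>X. \<Sum>y\<in>X. (complex_of_real (h x) * zf x ^ m) * cnj (complex_of_real (h y) * zf y ^ m))"
    unfolding S_def cnj_sum by (simp add: sum_product)
  also have "\<dots> = (\<Sum>x\<in>X. \<Sum>y\<in>X. complex_of_real (h x * h y) * (zf x * cnj (zf y))^m)"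
    by (intro sum.cong refl) (simp add: power_mult_distrib algebra_simps)
  finally have "Re (S * cnj S) = (\<Sum>x\<in>X. \<Sum>y\<in>X. Re ((zf x * cnj (zf y))^m) * h x * h y)"
    by (simp add: Re_sum algebra_simps)
  moreover have "Re (S * cnj S) = (cmod S)^2"
    by (simp add: complex_mult_cnj cmod_power2)
  ultimately show ?thesis by (metis zero_le_power2)
qed

lemma sum_list_swap:
  "(\<Sum>x\<in>A. \<Sum>l\<leftarrow>L. F l x) = (\<Sum>l\<leftarrow>L. \<Sum>x\<in>A. F l x)"
  by (induction L) (simp_all add: sum.distrib)

theorem lemma2:
  fixes X :: "(real^3) set"
  assumes "finite X" and "X \<subseteq> sphere 0 1"
  shows "(\<Sum>x\<in>X. \<Sum>y\<in>X. f_poly (cos (ang_dist x y))) \<ge> (real (card X))^2"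
proof -
  define zf :: "real^3 \<Rightarrow> complex" where "zf x = Complex (x$1) (x$2)" for x
  define cz :: "real^3 \<Rightarrow> real" where "cz x = x$3" for x
  define G where "G a m cs x y = a * (Re ((zf x * cnj (zf y))^m) * peval cs (cz x) * peval cs (cz y))" for a m cs x y
  have nx: "(x$1)^2 + (x$2)^2 + (x$3)^2 = 1" if "x \<in> X" for x
  proof -
    have "norm x = 1" using that assms(2) by auto
    then have "inner x x = 1" by (simp add: power2_norm_eq_inner[symmetric])
    then show ?thesis by (simp add: inner_vec_def sum_3 power2_eq_square)
  qed
  have pt: "f_poly (cos (ang_dist x y)) = 1 + (\<Sum>(a,m,cs)\<leftarrow>LL. G a m cs x y)"
    if "x \<in> X" "y \<in> X" for x y
  proof -
    have "norm x = 1" "norm y = 1" using that assms(2) by auto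
    then have "\<bar>inner x y\<bar> \<le> 1" using Cauchy_Schwarz_ineq2[of x y] by simp
    then have "cos (ang_dist x y) = inner x y" unfolding ang_dist_def by (simp add: cos_arccos_abs)
    also have "\<dots> = Re (zf x * cnj (zf y)) + cz x * cz y"
      by (simp add: inner_vec_def sum_3 zf_def cz_def)
    finally have e1: "cos (ang_dist x y) = Re (zf x * cnj (zf y)) + cz x * cz y" .
    have e2: "(1 - (cz x)^2) * (1 - (cz y)^2) = (cmod (zf x * cnj (zf y)))^2"
    proof -
      have a: "(cmod (zf x * cnj (zf y)))^2 = ((x$1)^2+(x$2)^2)*((y$1)^2+(y$2)^2)"
        by (simp add: zf_def norm_mult power_mult_distrib cmod_power2)
      have b: "(x$1)^2+(x$2)^2 = 1 - (cz x)^2" "(y$1)^2+(y$2)^2 = 1 - (cz y)^2"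
        using nx[OF that(1)] nx[OF that(2)] unfolding cz_def by linarith+
      show ?thesis unfolding a b ..
    qed
    show ?thesis
      unfolding e1 key TT_def e2 RR_Re[symmetric] G_def
      by (intro arg_cong[where f="\<lambda>u. 1 + u"] arg_cong[where f=sum_list] map_cong refl; auto)
  qed
  have "(\<Sum>x\<in>X. \<Sum>y\<in>X. f_poly (cos (ang_dist x y))) = (\<Sum>x\<in>X. \<Sum>y\<in>X. 1 + (\<Sum>(a,m,cs)\<leftarrow>LL. G a m cs x y))"
    using pt by (intro sum.cong refl) auto
  also have "\<dots> = (real (card X))^2 + (\<Sum>(a,m,cs)\<leftarrow>LL. \<Sum>x\<in>X. \<Sum>y\<in>X. G a m cs x y)"
    by (simp add: sum.distrib sum_list_swap power2_eq_square split_def)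
  also have "\<dots> \<ge> (real (card X))^2"
  proof -
    have "0 \<le> (\<Sum>(a,m,cs)\<leftarrow>LL. \<Sum>x\<in>X. \<Sum>y\<in>X. G a m cs x y)"
    proof (rule sum_list_nonneg)
      fix v assume "v \<in> set (map (\<lambda>(a,m,cs). \<Sum>x\<in>X. \<Sum>y\<in>X. G a m cs x y) LL)"
      then obtain a m cs where t: "(a,m,cs) \<in> set LL" and v: "v = (\<Sum>x\<in>X. \<Sum>y\<in>X. G a m cs x y)" by auto
      have a: "a \<ge> 0" using LL_nonneg t by force
      have "v = a * (\<Sum>x\<in>X. \<Sum>y\<in>X. Re ((zf x * cnj (zf y))^m) * peval cs (cz x) * peval cs (cz y))"
        unfolding v G_def by (simp add: sum_distrib_left)
      also have "\<dots> \<ge> 0" using a psd[OF assms(1), of zf m "\<lambda>x. peval cs (cz x)"] by simp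
      finally show "0 \<le> v" .
    qed
    then show ?thesis by simp
  qed
  finally show ?thesis .
qed

end
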